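(* There is an absolute constant $C>0$ such that the following holds. Let $\varepsilon>0$, let $\pi$ be a target distribution on $\mathbb{R}^d$ satisfying the Cheeger isoperimetric inequality with some constant $\mathsf{Ch}>0$, and let $\mu$ be a proposal distribution on $\mathbb{R}^d$ such that $\mathsf R_q(\mu\|\pi)\le C_{\mathsf R}q^\gamma$ and $\mathsf R_q(\pi\|\mu)\le C_{\mathsf R}q^\gamma$ for all $1\le q\le C\log(1/\varepsilon)$, where $\gamma>0$ is an absolute constant and $C_{\mathsf R}>0$ satisfies $C_{\mathsf R}\ll(\log(1/\varepsilon))^{-(\gamma+1)}$ (i.e. $C_{\mathsf R}$ is at most a sufficiently small absolute constant times $(\log(1/\varepsilon))^{-(\gamma+1)}$). Assume further that both $\mu$ and $\pi$ are atomless. Then the independent Metropolis–Hastings algorithm (described in the context) returns a sample whose marginal distribution is within total variation distance $\varepsilon$ of $\pi$ after $N=\mathcal O(\log(1/\varepsilon))$ iterations.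
   Context: Rényi divergence of order $q>1$: $\mathsf R_q(\mu\|\nu)=\frac1{q-1}\log\int(\frac{d\mu}{d\nu})^q\,d\nu$, with $\mathsf R_1=\mathsf{KL}$. $\pi$ satisfies the Cheeger isoperimetric inequality with constant $\mathsf{Ch}$ if $\liminf_{\delta\to0^+}\frac{\pi(A^\delta)-\pi(A)}{\delta}\ge\frac1{\mathsf{Ch}}\pi(A)(1-\pi(A))$ for every measurable $A\subseteq\mathbb{R}^d$, where $A^\delta=\{x:\mathrm{dist}(x,A)<\delta\}$. Independent Metropolis–Hastings algorithm with target $\pi$ and proposal $\mu$: draw $x_0\sim\mu$; for $n=0,\dots,N-1$ draw $U\sim\mathrm{Unif}(0,1)$ and $z\sim\mu$ independently, set $a(x_n,z)=\frac12\min\bigl(1,\frac{\pi(z)\mu(x_n)}{\pi(x_n)\mu(z)}\bigr)$, and set $x_{n+1}=z$ if $U\le a(x_n,z)$, otherwise $x_{n+1}=x_n$; return $x_N$. *)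

theory Defs
  imports "HOL-Probability.Probability"
begin

text \<open>Euclidean space R^d, represented as extensional functions on the index set {..<d},
  with its Borel sigma-algebra (product of Borel sigma-algebras) and the Euclidean distance.
  This explicit representation lets the dimension d be quantified inside the statement, so
  that the constants can be required to be independent of d.\<close>

definition Rd :: "nat \<Rightarrow> (nat \<Rightarrow> real) measure" where
  "Rd d = Pi\<^sub>M {..<d} (\<lambda>_. borel)"

definition rdist :: "nat \<Rightarrow> (nat \<Rightarrow> real) \<Rightarrow> (nat \<Rightarrow> real) \<Rightarrow> real" where
  "rdist d x y = sqrt (\<Sum>i<d. (x i - y i)^2)"

definition enlarge :: "nat \<Rightarrow> (nat \<Rightarrow> real) set \<Rightarrow> real \<Rightarrow> (nat \<Rightarrow> real) set" where
  "enlarge d A \<delta> = {x \<in> space (Rd d). \<exists>y\<in>A. rdist d x y < \<delta>}"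

definition cheeger :: "nat \<Rightarrow> (nat \<Rightarrow> real) measure \<Rightarrow> real \<Rightarrow> bool" where
  "cheeger d \<pi> Ch \<longleftrightarrow>
     (\<forall>A\<in>sets (Rd d).
        Liminf (at_right 0) (\<lambda>\<delta>. ereal ((measure \<pi> (enlarge d A \<delta>) - measure \<pi> A) / \<delta>))
          \<ge> ereal (1 / Ch * measure \<pi> A * (1 - measure \<pi> A)))"

definition renyi :: "real \<Rightarrow> 'a measure \<Rightarrow> 'a measure \<Rightarrow> ereal" where
  "renyi q \<mu> \<nu> =
    (let \<rho> = (\<lambda>x. enn2real (RN_deriv \<nu> \<mu> x)) in
     if \<not> absolutely_continuous \<nu> \<mu> then \<infinity>
     else if q = 1 then
       (if integrable \<mu> (\<lambda>x. ln (\<rho> x)) then ereal (\<integral>x. ln (\<rho> x) \<partial>\<mu>) else \<infinity>)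
     else
       (let I = (\<integral>\<^sup>+x. ennreal (\<rho> x powr q) \<partial>\<nu>) in
        if I = \<infinity> then \<infinity> else ereal (ln (enn2real I) / (q - 1))))"

definition atomless :: "'a measure \<Rightarrow> bool" where
  "atomless M \<longleftrightarrow> (\<forall>x\<in>space M. emeasure M {x} = 0)"

text \<open>Acceptance probability a(x,z) = 1/2 min(1, pi(z)mu(x)/(pi(x)mu(z))), written with the
  density ratio w = d pi / d mu (so pi(z)mu(x)/(pi(x)mu(z)) = w(z)/w(x)); if w(x) = 0 the
  ratio is +infinity and the min is 1.\<close>
definition imh_accept :: "(nat \<Rightarrow> real) measure \<Rightarrow> (nat \<Rightarrow> real) measure
    \<Rightarrow> (nat \<Rightarrow> real) \<Rightarrow> (nat \<Rightarrow> real) \<Rightarrow> real" where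
  "imh_accept \<mu> \<pi> x z =
    (let w = (\<lambda>y. enn2real (RN_deriv \<mu> \<pi> y)) in
     if w x = 0 then 1/2 else 1/2 * min 1 (w z / w x))"

text \<open>One IMH step from x: draw z ~ mu, accept (U <= a(x,z), i.e. a Bernoulli(a(x,z)) coin)
  and move to z, otherwise stay at x.\<close>
definition imh_kernel :: "nat \<Rightarrow> (nat \<Rightarrow> real) measure \<Rightarrow> (nat \<Rightarrow> real) measure
    \<Rightarrow> (nat \<Rightarrow> real) \<Rightarrow> (nat \<Rightarrow> real) measure" where
  "imh_kernel d \<mu> \<pi> x =
     \<mu> \<bind> (\<lambda>z. measure_pmf (bernoulli_pmf (imh_accept \<mu> \<pi> x z)) \<bind>
                (\<lambda>b. return (Rd d) (if b then z else x)))"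

primrec imh_law :: "nat \<Rightarrow> (nat \<Rightarrow> real) measure \<Rightarrow> (nat \<Rightarrow> real) measure \<Rightarrow> nat
    \<Rightarrow> (nat \<Rightarrow> real) measure" where
  "imh_law d \<mu> \<pi> 0 = \<mu>"
| "imh_law d \<mu> \<pi> (Suc n) = imh_law d \<mu> \<pi> n \<bind> imh_kernel d \<mu> \<pi>"

definition tv_dist :: "nat \<Rightarrow> (nat \<Rightarrow> real) measure \<Rightarrow> (nat \<Rightarrow> real) measure \<Rightarrow> real" where
  "tv_dist d P Q = (SUP A\<in>sets (Rd d). \<bar>measure P A - measure Q A\<bar>)"

end

theory Submission
  imports Defs
begin


definition bmix :: "'a measure \<Rightarrow> real \<Rightarrow> 'a \<Rightarrow> 'a \<Rightarrow> 'a measure" where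
  "bmix N p z x = measure_pmf (bernoulli_pmf p) \<bind> (\<lambda>b. return N (if b then z else x))"

lemma bmix_meas:
  assumes "z \<in> space N" "x \<in> space N"
  shows "(\<lambda>b. return N (if b then z else x)) \<in> measure_pmf P \<rightarrow>\<^sub>M subprob_algebra N"
  using assms by (auto simp: space_subprob_algebra subprob_space_return)

lemma bmix_sets:
  assumes "z \<in> space N" "x \<in> space N"
  shows "sets (bmix N p z x) = sets N"
  unfolding bmix_def by (rule sets_bind) auto

lemma bmix_prob:
  assumes "z \<in> space N" "x \<in> space N"
  shows "prob_space (bmix N p z x)"
  unfolding bmix_def
  by (rule prob_space.prob_space_bind[OF prob_space_measure_pmf _ bmix_meas[OF assms]])
     (use assms in \<open>auto intro!: AE_I2 prob_space_return\<close>)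

lemma bmix_emeasure:
  assumes "z \<in> space N" "x \<in> space N" "0 \<le> p" "p \<le> 1" "A \<in> sets N"
  shows "emeasure (bmix N p z x) A = ennreal p * indicator A z + ennreal (1 - p) * indicator A x"
  unfolding bmix_def
  using assms by (subst emeasure_bind[OF _ bmix_meas[OF assms(1,2)]]) (auto simp: mult.commute)

lemma bmix_integral:
  fixes g :: "'a \<Rightarrow> real"
  assumes "z \<in> space N" "x \<in> space N" "0 \<le> p" "p \<le> 1" "g \<in> borel_measurable N"
    "\<And>y. y \<in> space N \<Longrightarrow> \<bar>g y\<bar> \<le> 1"
  shows "integral\<^sup>L (bmix N p z x) g = p * g z + (1 - p) * g x"
proof -
  have "integral\<^sup>L (bmix N p z x) g = (\<integral>b. integral\<^sup>L (return N (if b then z else x)) g \<partial>measure_pmf (bernoulli_pmf p))"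
    unfolding bmix_def
    by (rule integral_bind[OF assms(5) assms(6) bmix_meas[OF assms(1,2)], where B'=1])
       (use assms in \<open>auto intro!: AE_I2 prob_space_imp_subprob_space simp: prob_space.emeasure_space_1 prob_space_return prob_space_measure_pmf\<close>)
  also have "\<dots> = p * g z + (1 - p) * g x"
    using assms by (subst integral_bernoulli_pmf) (auto simp: integral_return mult.commute)
  finally show ?thesis .
qed


definition wf :: "(nat \<Rightarrow> real) measure \<Rightarrow> (nat \<Rightarrow> real) measure \<Rightarrow> (nat \<Rightarrow> real) \<Rightarrow> real" where
  "wf \<mu> \<pi> x = enn2real (RN_deriv \<mu> \<pi> x)"

lemma imh_accept_wf: "imh_accept \<mu> \<pi> x z = (if wf \<mu> \<pi> x = 0 then 1/2 else 1/2 * min 1 (wf \<mu> \<pi> z / wf \<mu> \<pi> x))"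
  by (simp add: imh_accept_def wf_def Let_def)

lemma wf_nonneg: "0 \<le> wf \<mu> \<pi> x"
  by (simp add: wf_def)

lemma accept_bounds: "0 \<le> imh_accept \<mu> \<pi> x z" "imh_accept \<mu> \<pi> x z \<le> 1/2"
  unfolding imh_accept_wf using wf_nonneg[of \<mu> \<pi>] by auto

lemma imh_kernel_bmix: "imh_kernel d \<mu> \<pi> x = \<mu> \<bind> (\<lambda>z. bmix (Rd d) (imh_accept \<mu> \<pi> x z) z x)"
  by (simp add: imh_kernel_def bmix_def)

lemma bnd_int:
  fixes f :: "_ \<Rightarrow> real"
  assumes "prob_space \<rho>" "sets \<rho> = sets M" "f \<in> borel_measurable M" "\<And>x. x \<in> space M \<Longrightarrow> \<bar>f x\<bar> \<le> c"
  shows "integrable \<rho> f"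
proof -
  interpret r: prob_space \<rho> by fact
  have sp: "space \<rho> = space M" using assms(2) by (rule sets_eq_imp_space_eq)
  show ?thesis
    by (rule r.integrable_const_bound[where B=c]) (use assms sp measurable_cong_sets[OF assms(2) refl] in auto)
qed


lemma lin_aux:
  fixes X1 X2 m1 m2 Y1 Y2 Z1 Z2 R K1 K2 :: real
  shows "0 \<le> X1 \<Longrightarrow> X1 \<le> m1 \<Longrightarrow> 0 \<le> X2 \<Longrightarrow> X2 \<le> m2 \<Longrightarrow> \<bar>Y1 - Y2\<bar> \<le> m1 + m2 \<Longrightarrow>
    \<bar>Z1 - Z2\<bar> \<le> R \<Longrightarrow> K1 = X1 + Y1 + Z1 \<Longrightarrow> K2 = X2 + Y2 + Z2 \<Longrightarrow> \<bar>K1 - K2\<bar> \<le> R + 2 * (m1 + m2)"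
  by (simp add: abs_le_iff)


lemma lin2: fixes x1 x2 y1 y2 z :: real shows "x1 \<le> y1 \<Longrightarrow> x2 \<le> y2 \<Longrightarrow> z = 2*y1 + 2*y2 \<Longrightarrow> 2*(x1+x2) \<le> z"
  by (simp add: algebra_simps)

locale imh_loc =
  fixes d :: nat and \<mu> \<pi> :: "(nat \<Rightarrow> real) measure"
  assumes mu: "prob_space \<mu>" and smu: "sets \<mu> = sets (Rd d)"
    and pi: "prob_space \<pi>" and spi: "sets \<pi> = sets (Rd d)"
    and ac: "absolutely_continuous \<mu> \<pi>"
begin

abbreviation "w \<equiv> wf \<mu> \<pi>"
abbreviation "a \<equiv> imh_accept \<mu> \<pi>"
abbreviation "K \<equiv> imh_kernel d \<mu> \<pi>"

lemma space_mu: "space \<mu> = space (Rd d)"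
  using smu by (rule sets_eq_imp_space_eq)

lemma w_meas[measurable]: "w \<in> borel_measurable (Rd d)"
proof -
  have "(\<lambda>x. enn2real (RN_deriv \<mu> \<pi> x)) \<in> borel_measurable \<mu>" by measurable
  then show ?thesis unfolding wf_def[abs_def] using measurable_cong_sets[OF smu refl] by blast
qed

lemma a_meas[measurable]: "(\<lambda>p. a (fst p) (snd p)) \<in> borel_measurable (Rd d \<Otimes>\<^sub>M Rd d)"
  unfolding imh_accept_wf by measurable

lemma space_pair_Rd: "p \<in> space (Rd d \<Otimes>\<^sub>M \<mu>) \<Longrightarrow> fst p \<in> space (Rd d) \<and> snd p \<in> space (Rd d)"
  unfolding space_pair_measure space_mu by (simp add: mem_Times_iff)

lemma bmix_kernel_meas:
  "(\<lambda>(x, z). bmix (Rd d) (a x z) z x) \<in> Rd d \<Otimes>\<^sub>M \<mu> \<rightarrow>\<^sub>M subprob_algebra (Rd d)"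
proof (rule measurable_subprob_algebra)
  fix p assume p: "p \<in> space (Rd d \<Otimes>\<^sub>M \<mu>)"
  then have "fst p \<in> space (Rd d)" "snd p \<in> space (Rd d)" using space_pair_Rd by auto
  then show "subprob_space ((\<lambda>(x, z). bmix (Rd d) (a x z) z x) p)"
    "sets ((\<lambda>(x, z). bmix (Rd d) (a x z) z x) p) = sets (Rd d)"
    by (simp_all add: case_prod_beta prob_space_imp_subprob_space bmix_prob bmix_sets)
next
  fix A assume A: "A \<in> sets (Rd d)"
  have "(\<lambda>p. ennreal (a (fst p) (snd p)) * indicator A (snd p) + ennreal (1 - a (fst p) (snd p)) * indicator A (fst p))
        \<in> borel_measurable (Rd d \<Otimes>\<^sub>M \<mu>)"
  proof -
    have "(\<lambda>p. ennreal (a (fst p) (snd p)) * indicator A (snd p) + ennreal (1 - a (fst p) (snd p)) * indicator A (fst p))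
        \<in> borel_measurable (Rd d \<Otimes>\<^sub>M Rd d)"
      using A by measurable
    moreover have "sets (Rd d \<Otimes>\<^sub>M \<mu>) = sets (Rd d \<Otimes>\<^sub>M Rd d)"
      by (rule sets_pair_measure_cong[OF refl smu])
    ultimately show ?thesis using measurable_cong_sets by blast
  qed
  then show "(\<lambda>p. emeasure ((\<lambda>(x, z). bmix (Rd d) (a x z) z x) p) A) \<in> borel_measurable (Rd d \<Otimes>\<^sub>M \<mu>)"
  proof (rule measurable_cong[THEN iffD1, rotated])
    fix p assume p: "p \<in> space (Rd d \<Otimes>\<^sub>M \<mu>)"
    then have "fst p \<in> space (Rd d)" "snd p \<in> space (Rd d)" using space_pair_Rd by auto
    then show "ennreal (a (fst p) (snd p)) * indicator A (snd p) + ennreal (1 - a (fst p) (snd p)) * indicator A (fst p) = emeasure ((\<lambda>(x, z). bmix (Rd d) (a x z) z x) p) A"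
      using A accept_bounds[of \<mu> \<pi> "fst p" "snd p"] by (simp add: case_prod_beta bmix_emeasure)
  qed
qed

lemma K_meas[measurable]: "K \<in> Rd d \<rightarrow>\<^sub>M subprob_algebra (Rd d)"
proof -
  have "(\<lambda>x. \<mu> \<bind> (\<lambda>z. bmix (Rd d) (a x z) z x)) \<in> Rd d \<rightarrow>\<^sub>M subprob_algebra (Rd d)"
    apply (rule measurable_bind'[where N=\<mu>])
     apply (rule measurable_const)
    using mu smu apply (simp add: space_subprob_algebra prob_space_imp_subprob_space)
    using bmix_kernel_meas by (simp add: split_beta')
  then show ?thesis unfolding imh_kernel_bmix[abs_def] .
qed


lemma accept_le1: "a x z \<le> 1" using accept_bounds(2)[of \<mu> \<pi> x z] by linarith

sublocale m: prob_space \<mu> by (rule mu)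

lemma meas_pair_mu: "f \<in> borel_measurable (Rd d \<Otimes>\<^sub>M Rd d) \<Longrightarrow> f \<in> borel_measurable (Rd d \<Otimes>\<^sub>M \<mu>)"
  using measurable_cong_sets[OF sets_pair_measure_cong[OF refl smu] refl] by blast

lemma meas_mu: "f \<in> borel_measurable (Rd d) \<Longrightarrow> f \<in> borel_measurable \<mu>"
  using measurable_cong_sets[OF smu refl] by blast

lemma bmix_x_meas: "x \<in> space (Rd d) \<Longrightarrow> (\<lambda>z. bmix (Rd d) (a x z) z x) \<in> \<mu> \<rightarrow>\<^sub>M subprob_algebra (Rd d)"
  using measurable_Pair2[OF bmix_kernel_meas] by simp

lemma K_space: "x \<in> space (Rd d) \<Longrightarrow> K x \<in> space (subprob_algebra (Rd d))"
  using K_meas by (rule measurable_space)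

lemma K_sets: "x \<in> space (Rd d) \<Longrightarrow> sets (K x) = sets (Rd d)"
  using K_space by (simp add: space_subprob_algebra)

lemma K_prob: "x \<in> space (Rd d) \<Longrightarrow> prob_space (K x)"
  unfolding imh_kernel_bmix
  by (rule m.prob_space_bind[OF _ bmix_x_meas]) (auto intro!: AE_I2 bmix_prob simp: space_mu)

lemma K_integral:
  fixes g :: "_ \<Rightarrow> real"
  assumes x: "x \<in> space (Rd d)" and g[measurable]: "g \<in> borel_measurable (Rd d)"
    and gb: "\<And>y. y \<in> space (Rd d) \<Longrightarrow> \<bar>g y\<bar> \<le> 1"
  shows "integral\<^sup>L (K x) g = (\<integral>z. a x z * g z + (1 - a x z) * g x \<partial>\<mu>)"
proof -
  have "integral\<^sup>L (K x) g = (\<integral>z. integral\<^sup>L (bmix (Rd d) (a x z) z x) g \<partial>\<mu>)"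
    unfolding imh_kernel_bmix
    apply (rule integral_bind[OF g gb bmix_x_meas[OF x], where B'=1])
      apply assumption
    using mu apply (simp add: prob_space_def)
    apply (rule AE_I2)
    using x space_mu by (simp add: bmix_prob prob_space.emeasure_space_1)
  also have "\<dots> = (\<integral>z. a x z * g z + (1 - a x z) * g x \<partial>\<mu>)"
    apply (rule Bochner_Integration.integral_cong[OF refl])
    apply (rule bmix_integral)
    using x space_mu gb accept_bounds[of \<mu> \<pi> x] by (auto simp: accept_le1)
  finally show ?thesis .
qed

definition Kg :: "((nat \<Rightarrow> real) \<Rightarrow> real) \<Rightarrow> (nat \<Rightarrow> real) \<Rightarrow> real" where
  "Kg g x = (\<integral>z. a x z * g z \<partial>\<mu>) + (1 - (\<integral>z. a x z \<partial>\<mu>)) * g x"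

lemma a_x_meas[measurable]: "x \<in> space (Rd d) \<Longrightarrow> a x \<in> borel_measurable \<mu>"
  using measurable_Pair2[OF meas_pair_mu[OF a_meas], of x] by simp

lemma a_x_int: "x \<in> space (Rd d) \<Longrightarrow> integrable \<mu> (a x)"
  apply (rule m.integrable_const_bound[where B="1/2"])
  using accept_bounds[of \<mu> \<pi> x] by (auto intro!: AE_I2)

lemma ag_int:
  assumes x: "x \<in> space (Rd d)" and g[measurable]: "g \<in> borel_measurable (Rd d)"
    and gb: "\<And>y. y \<in> space (Rd d) \<Longrightarrow> \<bar>g y\<bar> \<le> 1"
  shows "integrable \<mu> (\<lambda>z. a x z * g z)"
  apply (rule m.integrable_const_bound[where B="1"])
  apply (rule AE_I2)
  subgoal premises prems for z
  proof -
    have "a x z * \<bar>g z\<bar> \<le> 1 * 1"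
      using accept_bounds[of \<mu> \<pi> x z] gb[of z] prems space_mu accept_le1[of x z]
      by (intro mult_mono) auto
    then show ?thesis using accept_bounds[of \<mu> \<pi> x z] by (simp add: abs_mult)
  qed
  using a_x_meas[OF x] meas_mu[OF g] by (rule borel_measurable_times)

lemma K_integral':
  fixes g :: "_ \<Rightarrow> real"
  assumes x: "x \<in> space (Rd d)" and g[measurable]: "g \<in> borel_measurable (Rd d)"
    and gb: "\<And>y. y \<in> space (Rd d) \<Longrightarrow> \<bar>g y\<bar> \<le> 1"
  shows "integral\<^sup>L (K x) g = Kg g x"
proof -
  have "(\<integral>z. a x z * g z + (1 - a x z) * g x \<partial>\<mu>) = (\<integral>z. a x z * g z \<partial>\<mu>) + (\<integral>z. (1 - a x z) * g x \<partial>\<mu>)"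
    by (rule Bochner_Integration.integral_add[OF ag_int[OF assms]])
      (use a_x_int[OF x] in \<open>auto intro!: integrable_mult_left integrable_diff m.integrable_const\<close>)
  also have "(\<integral>z. (1 - a x z) * g x \<partial>\<mu>) = (1 - (\<integral>z. a x z \<partial>\<mu>)) * g x"
    using a_x_int[OF x] prob_space.prob_space[OF mu] by (simp add: Bochner_Integration.integral_diff)
  finally show ?thesis using K_integral[OF assms] by (simp add: Kg_def)
qed

lemma Kg_meas:
  assumes g[measurable]: "g \<in> borel_measurable (Rd d)"
  shows "Kg g \<in> borel_measurable (Rd d)"
proof -
  interpret m: prob_space \<mu> by (rule mu)
  have 1: "(\<lambda>(x, z). a x z * g z) \<in> borel_measurable (Rd d \<Otimes>\<^sub>M \<mu>)"
    by (rule meas_pair_mu, unfold split_beta') measurable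
  have 2: "(\<lambda>(x, z). a x z) \<in> borel_measurable (Rd d \<Otimes>\<^sub>M \<mu>)"
    by (rule meas_pair_mu, unfold split_beta') measurable
  show ?thesis unfolding Kg_def[abs_def]
    using m.borel_measurable_lebesgue_integral[OF 1] m.borel_measurable_lebesgue_integral[OF 2]
    by (intro borel_measurable_add borel_measurable_times borel_measurable_diff borel_measurable_const g) auto
qed



lemma pi_density: "\<pi> = density \<mu> (\<lambda>x. ennreal (w x))"
proof -
  have "\<pi> = density \<mu> (RN_deriv \<mu> \<pi>)"
    using m.density_RN_deriv[OF ac] spi smu by simp
  also have "\<dots> = density \<mu> (\<lambda>x. ennreal (w x))"
  proof (rule density_cong)
    show "RN_deriv \<mu> \<pi> \<in> borel_measurable \<mu>" by simp
    show "(\<lambda>x. ennreal (w x)) \<in> borel_measurable \<mu>" using meas_mu[OF w_meas] by simp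
    have "AE x in \<mu>. RN_deriv \<mu> \<pi> x \<noteq> \<infinity>"
      by (rule m.RN_deriv_finite[OF _ ac]) (use pi spi smu in \<open>auto simp: prob_space_def finite_measure_def\<close>)
    then show "AE x in \<mu>. RN_deriv \<mu> \<pi> x = ennreal (w x)"
      by eventually_elim (simp add: wf_def less_top)
  qed
  finally show ?thesis .
qed

lemma w_mu_meas[measurable]: "w \<in> borel_measurable \<mu>"
  using meas_mu[OF w_meas] .

lemma w_int: "integrable \<mu> w"
proof -
  interpret p: prob_space \<pi> by (rule pi)
  have "integrable \<pi> (\<lambda>_. 1::real)" by simp
  then have "integrable (density \<mu> (\<lambda>x. ennreal (w x))) (\<lambda>_. 1::real)" using pi_density by simp
  then show ?thesis
    by (subst (asm) integrable_density) (auto simp: wf_nonneg)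
qed

lemma int_pi:
  fixes f :: "_ \<Rightarrow> real"
  assumes "f \<in> borel_measurable (Rd d)"
  shows "integral\<^sup>L \<pi> f = (\<integral>x. w x * f x \<partial>\<mu>)"
  using pi_density integral_density[of f \<mu> w] meas_mu[OF assms] wf_nonneg[of \<mu> \<pi>] by simp

lemma w_integral: "(\<integral>x. w x \<partial>\<mu>) = 1"
proof -
  interpret p: prob_space \<pi> by (rule pi)
  have "integral\<^sup>L \<pi> (\<lambda>_. 1::real) = 1" by (simp add: p.prob_space)
  then show ?thesis using int_pi[of "\<lambda>_. 1"] by simp
qed

definition sf :: "(nat \<Rightarrow> real) \<Rightarrow> (nat \<Rightarrow> real) \<Rightarrow> real" where
  "sf x z = min (w x) (w z) / 2"

lemma w_a: "w x * a x z = sf x z"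
  using wf_nonneg[of \<mu> \<pi> z] wf_nonneg[of \<mu> \<pi> x]
  by (auto simp: imh_accept_wf sf_def min_def field_simps)

lemma sf_sym: "sf x z = sf z x"
  by (simp add: sf_def min.commute)

lemma sf_bounds: "0 \<le> sf x z" "sf x z \<le> w x / 2"
  using wf_nonneg[of \<mu> \<pi> z] wf_nonneg[of \<mu> \<pi> x] by (auto simp: sf_def)

lemma sf_meas[measurable]: "(\<lambda>p. sf (fst p) (snd p)) \<in> borel_measurable (\<mu> \<Otimes>\<^sub>M \<mu>)"
  unfolding sf_def by measurable

sublocale mm: pair_sigma_finite \<mu> \<mu> ..

lemma F_int:
  fixes g :: "_ \<Rightarrow> real"
  assumes g[measurable]: "g \<in> borel_measurable (Rd d)" and gb: "\<And>y. y \<in> space (Rd d) \<Longrightarrow> 0 \<le> g y \<and> g y \<le> 1"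
  shows "integrable (\<mu> \<Otimes>\<^sub>M \<mu>) (\<lambda>(x, z). sf x z * g z)"
proof (rule mm.Fubini_integrable)
  have gm[measurable]: "g \<in> borel_measurable \<mu>" using meas_mu[OF g] .
  show "(\<lambda>(x, z). sf x z * g z) \<in> borel_measurable (\<mu> \<Otimes>\<^sub>M \<mu>)"
    unfolding split_beta' by measurable
  have ib: "integrable \<mu> (\<lambda>z. sf x z * g z)" if x: "x \<in> space \<mu>" for x
  proof (rule m.integrable_const_bound[where B="w x / 2"])
    show "AE z in \<mu>. norm (sf x z * g z) \<le> w x / 2"
    proof (rule AE_I2)
      fix z assume "z \<in> space \<mu>"
      then have "0 \<le> g z" "g z \<le> 1" using gb space_mu by auto
      then have "sf x z * g z \<le> w x / 2 * 1" using sf_bounds[of x z]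
        by (intro mult_mono) auto
      then show "norm (sf x z * g z) \<le> w x / 2" using sf_bounds[of x z] \<open>0 \<le> g z\<close> by simp
    qed
    show "(\<lambda>z. sf x z * g z) \<in> borel_measurable \<mu>"
      using measurable_Pair2[OF sf_meas[unfolded split_beta'[symmetric]], of x] x by (simp add: split_beta')
  qed
  then show "AE x in \<mu>. integrable \<mu> (\<lambda>y. case (x, y) of (x, z) \<Rightarrow> sf x z * g z)"
    by (auto intro!: AE_I2)
  show "integrable \<mu> (\<lambda>x. \<integral>y. norm (case (x, y) of (x, z) \<Rightarrow> sf x z * g z) \<partial>\<mu>)"
  proof (rule Bochner_Integration.integrable_bound[OF w_int])
    show "(\<lambda>x. \<integral>y. norm (case (x, y) of (x, z) \<Rightarrow> sf x z * g z) \<partial>\<mu>) \<in> borel_measurable \<mu>"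
      by measurable
    show "AE x in \<mu>. norm (\<integral>y. norm (case (x, y) of (x, z) \<Rightarrow> sf x z * g z) \<partial>\<mu>) \<le> norm (w x)"
    proof (rule AE_I2)
      fix x assume x: "x \<in> space \<mu>"
      have "(\<integral>y. norm (sf x y * g y) \<partial>\<mu>) \<le> (\<integral>y. w x / 2 \<partial>\<mu>)"
      proof (rule integral_mono)
        show "integrable \<mu> (\<lambda>y. norm (sf x y * g y))" using ib[OF x] by simp
        show "integrable \<mu> (\<lambda>y. w x / 2)" by simp
        fix y assume "y \<in> space \<mu>"
        then have "0 \<le> g y" "g y \<le> 1" using gb space_mu by auto
        then have "sf x y * g y \<le> w x / 2 * 1" using sf_bounds[of x y]
          by (intro mult_mono) auto
        then show "norm (sf x y * g y) \<le> w x / 2" using sf_bounds[of x y] \<open>0 \<le> g y\<close> by simp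
      qed
      also have "\<dots> \<le> w x" using wf_nonneg[of \<mu> \<pi> x] by (simp add: m.prob_space)
      finally show "norm (\<integral>y. norm (case (x, y) of (x, z) \<Rightarrow> sf x z * g z) \<partial>\<mu>) \<le> norm (w x)"
        using wf_nonneg[of \<mu> \<pi> x] by (simp add: integral_nonneg_AE)
    qed
  qed
qed



lemma stationary:
  fixes g :: "_ \<Rightarrow> real"
  assumes g[measurable]: "g \<in> borel_measurable (Rd d)" and gb: "\<And>y. y \<in> space (Rd d) \<Longrightarrow> 0 \<le> g y \<and> g y \<le> 1"
  shows "integral\<^sup>L \<pi> (Kg g) = integral\<^sup>L \<pi> g"
proof -
  have gm[measurable]: "g \<in> borel_measurable \<mu>" using meas_mu[OF g] .
  have gb': "\<And>y. y \<in> space (Rd d) \<Longrightarrow> \<bar>g y\<bar> \<le> 1" using gb by fastforce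
  define f where "f = (\<lambda>x z. sf x z * g z)"
  have Fi: "integrable (\<mu> \<Otimes>\<^sub>M \<mu>) (case_prod f)" unfolding f_def using F_int[OF g gb] .
  define I1 where "I1 = (\<lambda>x. \<integral>z. f x z \<partial>\<mu>)"
  define I2 where "I2 = (\<lambda>x. \<integral>z. f z x \<partial>\<mu>)"
  have i1: "integrable \<mu> I1" unfolding I1_def using mm.integrable_fst[OF Fi] .
  have i2: "integrable \<mu> I2" unfolding I2_def using mm.integrable_snd[OF Fi] .
  have eq12: "integral\<^sup>L \<mu> I2 = integral\<^sup>L \<mu> I1"
    unfolding I1_def I2_def using mm.Fubini_integral[OF Fi] .
  have iwg: "integrable \<mu> (\<lambda>x. w x * g x)"
    apply (rule Bochner_Integration.integrable_bound[OF w_int])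
     apply (rule borel_measurable_times[OF w_mu_meas gm])
    apply (rule AE_I2)
    subgoal premises prems for x
    proof -
      have "0 \<le> g x" "g x \<le> 1" using gb prems space_mu by auto
      then have "w x * g x \<le> w x * 1" using wf_nonneg[of \<mu> \<pi> x] by (intro mult_left_mono) auto
      then show ?thesis using \<open>0 \<le> g x\<close> wf_nonneg[of \<mu> \<pi> x] by simp
    qed
    done
  have pw: "w x * Kg g x = I1 x + w x * g x - I2 x" if x: "x \<in> space (Rd d)" for x
  proof -
    have "w x * (\<integral>z. a x z * g z \<partial>\<mu>) = (\<integral>z. w x * (a x z * g z) \<partial>\<mu>)" by simp
    also have "\<dots> = I1 x" unfolding I1_def f_def
      by (rule Bochner_Integration.integral_cong[OF refl]) (simp add: w_a[symmetric])
    finally have 1: "w x * (\<integral>z. a x z * g z \<partial>\<mu>) = I1 x" .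
    have "w x * (\<integral>z. a x z \<partial>\<mu>) * g x = (\<integral>z. w x * a x z * g x \<partial>\<mu>)" by simp
    also have "\<dots> = I2 x" unfolding I2_def f_def
      by (rule Bochner_Integration.integral_cong[OF refl]) (simp add: w_a sf_sym)
    finally have 2: "w x * (\<integral>z. a x z \<partial>\<mu>) * g x = I2 x" .
    show ?thesis unfolding Kg_def using 1 2 by (simp add: algebra_simps)
  qed
  have "integral\<^sup>L \<pi> (Kg g) = (\<integral>x. w x * Kg g x \<partial>\<mu>)"
    using int_pi[OF Kg_meas[OF g]] .
  also have "\<dots> = (\<integral>x. I1 x + w x * g x - I2 x \<partial>\<mu>)"
    by (rule Bochner_Integration.integral_cong[OF refl]) (use pw space_mu in auto)
  also have "\<dots> = integral\<^sup>L \<mu> I1 + (\<integral>x. w x * g x \<partial>\<mu>) - integral\<^sup>L \<mu> I2"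
    using i1 i2 iwg by simp
  also have "\<dots> = (\<integral>x. w x * g x \<partial>\<mu>)" using eq12 by simp
  also have "\<dots> = integral\<^sup>L \<pi> g" using int_pi[OF g] by simp
  finally show ?thesis .
qed



definition Bset where "Bset = {x \<in> space (Rd d). exp 1 < w x}"
definition mf where "mf z = 1/2 * min 1 (w z / exp 1)"
definition beta where "beta = (\<integral>z. mf z \<partial>\<mu>)"

lemma Bset_sets[measurable]: "Bset \<in> sets (Rd d)"
  unfolding Bset_def by measurable

lemma mf_meas[measurable]: "mf \<in> borel_measurable (Rd d)"
  unfolding mf_def[abs_def] by measurable

lemma mf_bounds: "0 \<le> mf z" "mf z \<le> 1/2"
  using wf_nonneg[of \<mu> \<pi> z] by (auto simp: mf_def)

lemma mf_le_a: assumes "w x \<le> exp 1" shows "mf z \<le> a x z"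
proof (cases "w x = 0")
  case True then show ?thesis using mf_bounds[of z] by (simp add: imh_accept_wf)
next
  case False
  then have wx: "0 < w x" using wf_nonneg[of \<mu> \<pi> x] by simp
  have "w z / exp 1 \<le> w z / w x"
    using wx assms wf_nonneg[of \<mu> \<pi> z] by (intro divide_left_mono) auto
  then show ?thesis using False by (auto simp: imh_accept_wf mf_def)
qed

lemma mf_int: "integrable \<mu> mf"
  by (rule bnd_int[OF mu smu mf_meas, where c="1/2"]) (use mf_bounds in auto)

lemma beta_bounds: "0 \<le> beta" "beta \<le> 1/2"
proof -
  show "0 \<le> beta" unfolding beta_def using mf_bounds by (simp add: integral_nonneg_AE)
  have "beta \<le> (\<integral>z. 1/2 \<partial>\<mu>)" unfolding beta_def
    by (rule integral_mono[OF mf_int]) (use mf_bounds in auto)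
  then show "beta \<le> 1/2" by (simp add: m.prob_space)
qed

lemma beta_lower: "(1 - measure \<pi> Bset) / (2 * exp 1) \<le> beta"
proof -
  define q where "q = (\<lambda>z. (1 - indicator Bset z) * w z / (2 * exp 1) :: real)"
  have qm: "q \<in> borel_measurable (Rd d)" unfolding q_def[abs_def] by measurable
  have "(\<integral>z. q z \<partial>\<mu>) = (\<integral>z. w z * ((1 - indicator Bset z) / (2 * exp 1)) \<partial>\<mu>)"
    by (rule Bochner_Integration.integral_cong) (auto simp: q_def)
  also have "\<dots> = (\<integral>z. (1 - indicator Bset z) / (2 * exp 1) \<partial>\<pi>)"
    by (rule int_pi[symmetric]) measurable
  also have "\<dots> = (1 - measure \<pi> Bset) / (2 * exp 1)"
  proof -
    interpret p: prob_space \<pi> by (rule pi)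
    have sp: "space \<pi> = space (Rd d)" using spi by (rule sets_eq_imp_space_eq)
    have "Bset \<inter> space \<pi> = Bset" using sp by (auto simp: Bset_def)
    have Bs: "Bset \<in> sets \<pi>" using spi by simp
    have "(\<integral>z. 1 - indicator Bset z \<partial>\<pi>) = (\<integral>z. 1 \<partial>\<pi>) - (\<integral>z. indicator Bset z \<partial>\<pi> :: real)"
      by (rule Bochner_Integration.integral_diff) (use Bs p.emeasure_finite[of Bset] in \<open>auto intro!: integrable_real_indicator simp: less_top[symmetric]\<close>)
    then show ?thesis using \<open>Bset \<inter> space \<pi> = Bset\<close>
      by (simp add: p.prob_space)
  qed
  finally have 1: "(\<integral>z. q z \<partial>\<mu>) = (1 - measure \<pi> Bset) / (2 * exp 1)" .
  have "(\<integral>z. q z \<partial>\<mu>) \<le> beta" unfolding beta_def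
  proof (rule integral_mono_AE')
    show "integrable \<mu> mf" by (rule mf_int)
    show "AE z in \<mu>. q z \<le> mf z"
    proof (rule AE_I2)
      fix z assume z: "z \<in> space \<mu>"
      show "q z \<le> mf z"
      proof (cases "z \<in> Bset")
        case True then show ?thesis using mf_bounds[of z] by (simp add: q_def)
      next
        case False
        then have "w z \<le> exp 1" using z space_mu by (auto simp: Bset_def)
        then show ?thesis using False by (simp add: q_def mf_def min_def)
      qed
    qed
    show "AE z in \<mu>. 0 \<le> mf z" using mf_bounds by simp
  qed
  then show ?thesis using 1 by simp
qed



lemma K_meas_nu: "sets \<nu> = sets (Rd d) \<Longrightarrow> K \<in> \<nu> \<rightarrow>\<^sub>M subprob_algebra (Rd d)"
  using K_meas measurable_cong_sets[of \<nu> "Rd d" "subprob_algebra (Rd d)" "subprob_algebra (Rd d)"] by simp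

lemma bindK:
  assumes nu: "prob_space \<nu>" "sets \<nu> = sets (Rd d)"
  shows "prob_space (\<nu> \<bind> K)" "sets (\<nu> \<bind> K) = sets (Rd d)"
proof -
  interpret n: prob_space \<nu> by fact
  have sp: "space \<nu> = space (Rd d)" using nu(2) by (rule sets_eq_imp_space_eq)
  show "prob_space (\<nu> \<bind> K)"
    by (rule n.prob_space_bind[OF _ K_meas_nu[OF nu(2)]]) (use sp K_prob in auto)
  show "sets (\<nu> \<bind> K) = sets (Rd d)"
    by (rule sets_bind) (use sp K_sets n.not_empty in auto)
qed

lemma bind_int:
  fixes g :: "_ \<Rightarrow> real"
  assumes nu: "prob_space \<nu>" "sets \<nu> = sets (Rd d)"
    and g[measurable]: "g \<in> borel_measurable (Rd d)" and gb: "\<And>y. y \<in> space (Rd d) \<Longrightarrow> \<bar>g y\<bar> \<le> 1"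
  shows "integral\<^sup>L (\<nu> \<bind> K) g = (\<integral>x. Kg g x \<partial>\<nu>)"
proof -
  interpret n: prob_space \<nu> by fact
  have sp: "space \<nu> = space (Rd d)" using nu(2) by (rule sets_eq_imp_space_eq)
  have "integral\<^sup>L (\<nu> \<bind> K) g = (\<integral>x. integral\<^sup>L (K x) g \<partial>\<nu>)"
    by (rule integral_bind[OF g gb K_meas_nu[OF nu(2)], where B'=1])
       (use sp K_prob in \<open>auto intro!: AE_I2 simp: prob_space.emeasure_space_1 n.finite_measure_axioms\<close>)
  also have "\<dots> = (\<integral>x. Kg g x \<partial>\<nu>)"
    by (rule Bochner_Integration.integral_cong[OF refl]) (use sp K_integral'[OF _ g gb] in auto)
  finally show ?thesis .
qed

lemma Kg_bounds:
  fixes g :: "_ \<Rightarrow> real"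
  assumes g[measurable]: "g \<in> borel_measurable (Rd d)" and gb: "\<And>y. y \<in> space (Rd d) \<Longrightarrow> 0 \<le> g y \<and> g y \<le> 1"
    and x: "x \<in> space (Rd d)"
  shows "0 \<le> Kg g x" "Kg g x \<le> 1"
proof -
  have gb': "\<And>y. y \<in> space (Rd d) \<Longrightarrow> \<bar>g y\<bar> \<le> 1" using gb by fastforce
  define A where "A = (\<integral>z. a x z \<partial>\<mu>)"
  define G where "G = (\<integral>z. a x z * g z \<partial>\<mu>)"
  have A0: "0 \<le> A" unfolding A_def using accept_bounds by (simp add: integral_nonneg_AE)
  have A1: "A \<le> 1/2"
  proof -
    have "A \<le> (\<integral>z. 1/2 \<partial>\<mu>)" unfolding A_def
      by (rule integral_mono[OF a_x_int[OF x]]) (use accept_bounds in auto)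
    then show ?thesis by (simp add: m.prob_space)
  qed
  have G0: "0 \<le> G" unfolding G_def
    by (rule integral_nonneg_AE) (use accept_bounds gb space_mu in \<open>auto intro!: AE_I2\<close>)
  have GA: "G \<le> A" unfolding G_def A_def
  proof (rule integral_mono[OF ag_int[OF x g gb'] a_x_int[OF x]])
    fix z assume "z \<in> space \<mu>"
    then have "0 \<le> g z" "g z \<le> 1" using gb space_mu by auto
    then show "a x z * g z \<le> a x z" using accept_bounds[of \<mu> \<pi> x z] mult_left_mono[of "g z" 1 "a x z"] by simp
  qed
  have k: "Kg g x = G + (1 - A) * g x" unfolding Kg_def G_def A_def ..
  have "0 \<le> g x" "g x \<le> 1" using gb x by auto
  then have "(1 - A) * g x \<le> 1 - A" "0 \<le> (1 - A) * g x" using A1 mult_left_mono[of "g x" 1 "1 - A"] by auto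
  then show "0 \<le> Kg g x" "Kg g x \<le> 1" using k G0 GA by auto
qed

lemma mf_le1: "mf z \<le> 1" using mf_bounds(2)[of z] by linarith

lemma Kg_decomp:
  fixes g :: "_ \<Rightarrow> real"
  assumes g[measurable]: "g \<in> borel_measurable (Rd d)" and gb: "\<And>y. y \<in> space (Rd d) \<Longrightarrow> 0 \<le> g y \<and> g y \<le> 1"
    and x: "x \<in> space (Rd d)" "x \<notin> Bset"
  shows "0 \<le> Kg g x - (\<integral>z. mf z * g z \<partial>\<mu>)" "Kg g x - (\<integral>z. mf z * g z \<partial>\<mu>) \<le> 1 - beta"
proof -
  have gb': "\<And>y. y \<in> space (Rd d) \<Longrightarrow> \<bar>g y\<bar> \<le> 1" using gb by fastforce
  have wx: "w x \<le> exp 1" using x by (auto simp: Bset_def)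
  define A where "A = (\<integral>z. a x z \<partial>\<mu>)"
  define G where "G = (\<integral>z. a x z * g z \<partial>\<mu>)"
  define Mg where "Mg = (\<integral>z. mf z * g z \<partial>\<mu>)"
  have A1: "A \<le> 1/2"
  proof -
    have "A \<le> (\<integral>z. 1/2 \<partial>\<mu>)" unfolding A_def
      by (rule integral_mono[OF a_x_int[OF x(1)]]) (use accept_bounds in auto)
    then show ?thesis by (simp add: m.prob_space)
  qed
  have mgi: "integrable \<mu> (\<lambda>z. mf z * g z)"
    by (rule bnd_int[OF mu smu, where c=1]) (use mf_bounds gb mf_le1 in \<open>auto simp: abs_mult intro!: mult_le_one\<close>)
  have amgi: "integrable \<mu> (\<lambda>z. (a x z - mf z) * g z)"
    using ag_int[OF x(1) g gb'] mgi by (simp add: left_diff_distrib)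
  have amgi2: "integrable \<mu> (\<lambda>z. (a x z - mf z))"
    using a_x_int[OF x(1)] mf_int by simp
  have GM: "G - Mg = (\<integral>z. (a x z - mf z) * g z \<partial>\<mu>)"
    unfolding G_def Mg_def using ag_int[OF x(1) g gb'] mgi by (simp add: left_diff_distrib)
  have AB: "A - beta = (\<integral>z. (a x z - mf z) \<partial>\<mu>)"
    unfolding A_def beta_def using a_x_int[OF x(1)] mf_int by simp
  have "0 \<le> (\<integral>z. (a x z - mf z) * g z \<partial>\<mu>)"
    by (rule integral_nonneg_AE) (use mf_le_a[OF wx] gb space_mu in \<open>auto intro!: AE_I2\<close>)
  moreover have "(\<integral>z. (a x z - mf z) * g z \<partial>\<mu>) \<le> (\<integral>z. (a x z - mf z) \<partial>\<mu>)"
  proof (rule integral_mono[OF amgi amgi2])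
    fix z assume "z \<in> space \<mu>"
    then have "0 \<le> g z" "g z \<le> 1" using gb space_mu by auto
    then show "(a x z - mf z) * g z \<le> a x z - mf z"
      using mf_le_a[OF wx, of z] mult_left_mono[of "g z" 1 "a x z - mf z"] by simp
  qed
  moreover have k: "Kg g x = G + (1 - A) * g x" unfolding Kg_def G_def A_def ..
  moreover have "0 \<le> g x" "g x \<le> 1" using gb x by auto
  moreover then have "(1 - A) * g x \<le> 1 - A" "0 \<le> (1 - A) * g x" using A1 mult_left_mono[of "g x" 1 "1 - A"] by auto
  ultimately show "0 \<le> Kg g x - (\<integral>z. mf z * g z \<partial>\<mu>)" "Kg g x - (\<integral>z. mf z * g z \<partial>\<mu>) \<le> 1 - beta"
    using GM AB unfolding Mg_def[symmetric] by linarith+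
qed



definition Mg where "Mg g = (\<integral>z. mf z * g z \<partial>\<mu>)"
definition hf where "hf g x = (1 - indicator Bset x) * (Kg g x - Mg g) / (1 - beta)"

lemma Mg_bounds:
  fixes g :: "_ \<Rightarrow> real"
  assumes g[measurable]: "g \<in> borel_measurable (Rd d)" and gb: "\<And>y. y \<in> space (Rd d) \<Longrightarrow> 0 \<le> g y \<and> g y \<le> 1"
  shows "0 \<le> Mg g" "Mg g \<le> 1"
proof -
  have mgi: "integrable \<mu> (\<lambda>z. mf z * g z)"
    by (rule bnd_int[OF mu smu, where c=1]) (use mf_bounds gb mf_le1 in \<open>auto simp: abs_mult intro!: mult_le_one\<close>)
  show "0 \<le> Mg g" unfolding Mg_def
    by (rule integral_nonneg_AE) (use mf_bounds gb space_mu in \<open>auto intro!: AE_I2\<close>)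
  have "Mg g \<le> (\<integral>z. 1 \<partial>\<mu>)" unfolding Mg_def
    by (rule integral_mono[OF mgi]) (use mf_bounds gb space_mu mf_le1 in \<open>auto intro!: mult_le_one\<close>)
  then show "Mg g \<le> 1" by (simp add: m.prob_space)
qed

lemma hf_meas:
  fixes g :: "_ \<Rightarrow> real"
  assumes g[measurable]: "g \<in> borel_measurable (Rd d)"
  shows "hf g \<in> borel_measurable (Rd d)"
proof -
  have e: "hf g = (\<lambda>x. (1 - indicator Bset x) * (Kg g x - Mg g) / (1 - beta))"
    by (simp add: hf_def fun_eq_iff)
  have [measurable]: "Kg g \<in> borel_measurable (Rd d)" using Kg_meas[OF g] .
  show ?thesis unfolding e by measurable
qed

lemma hf_bounds:
  fixes g :: "_ \<Rightarrow> real"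
  assumes g[measurable]: "g \<in> borel_measurable (Rd d)" and gb: "\<And>y. y \<in> space (Rd d) \<Longrightarrow> 0 \<le> g y \<and> g y \<le> 1"
    and x: "x \<in> space (Rd d)"
  shows "0 \<le> hf g x" "hf g x \<le> 1"
proof -
  have b: "0 < 1 - beta" using beta_bounds by simp
  have "0 \<le> hf g x \<and> hf g x \<le> 1"
  proof (cases "x \<in> Bset")
    case True then show ?thesis by (simp add: hf_def)
  next
    case False
    from Kg_decomp[OF g gb x this] have "0 \<le> Kg g x - Mg g" "Kg g x - Mg g \<le> 1 - beta"
      by (simp_all add: Mg_def)
    then show ?thesis using False b by (simp add: hf_def)
  qed
  then show "0 \<le> hf g x" "hf g x \<le> 1" by auto
qed

lemma decomp_int:
  fixes g :: "_ \<Rightarrow> real"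
  assumes rho: "prob_space \<rho>" "sets \<rho> = sets (Rd d)"
    and g[measurable]: "g \<in> borel_measurable (Rd d)" and gb: "\<And>y. y \<in> space (Rd d) \<Longrightarrow> 0 \<le> g y \<and> g y \<le> 1"
  shows "(\<integral>x. Kg g x \<partial>\<rho>) = (\<integral>x. indicator Bset x * Kg g x \<partial>\<rho>) + Mg g * (1 - measure \<rho> Bset) + (1 - beta) * (\<integral>x. hf g x \<partial>\<rho>)"
proof -
  interpret r: prob_space \<rho> by fact
  have sp: "space \<rho> = space (Rd d)" using rho(2) by (rule sets_eq_imp_space_eq)
  have b: "1 - beta \<noteq> 0" using beta_bounds by simp
  have km[measurable]: "Kg g \<in> borel_measurable (Rd d)" using Kg_meas[OF g] .
  have hm[measurable]: "hf g \<in> borel_measurable (Rd d)" using hf_meas[OF g] .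
  have i1: "integrable \<rho> (\<lambda>x. indicator Bset x * Kg g x)"
    by (rule bnd_int[OF rho, where c=1]) (use Kg_bounds[OF g gb] in \<open>auto simp: indicator_def\<close>)
  have i2: "integrable \<rho> (\<lambda>x. Mg g * (1 - indicator Bset x))"
    by (rule bnd_int[OF rho, where c="\<bar>Mg g\<bar>"]) (auto simp: indicator_def)
  have i3: "integrable \<rho> (\<lambda>x. (1 - beta) * hf g x)"
    by (rule bnd_int[OF rho, where c="\<bar>1 - beta\<bar>"])
       (use hf_bounds[OF g gb] beta_bounds in \<open>auto simp: abs_mult intro!: mult_left_le\<close>)
  have "(\<integral>x. Kg g x \<partial>\<rho>) = (\<integral>x. indicator Bset x * Kg g x + Mg g * (1 - indicator Bset x) + (1 - beta) * hf g x \<partial>\<rho>)"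
    by (rule Bochner_Integration.integral_cong[OF refl]) (use b in \<open>auto simp: hf_def indicator_def\<close>)
  also have "\<dots> = (\<integral>x. indicator Bset x * Kg g x \<partial>\<rho>) + (\<integral>x. Mg g * (1 - indicator Bset x) \<partial>\<rho>) + (\<integral>x. (1 - beta) * hf g x \<partial>\<rho>)"
    using i1 i2 i3 by simp
  also have "(\<integral>x. Mg g * (1 - indicator Bset x) \<partial>\<rho>) = Mg g * (1 - measure \<rho> Bset)"
  proof -
    have Bs: "Bset \<in> sets \<rho>" using rho(2) by simp
    have "Bset \<inter> space \<rho> = Bset" using sp by (auto simp: Bset_def)
    moreover have "(\<integral>z. 1 - indicator Bset z \<partial>\<rho>) = (\<integral>z. 1 \<partial>\<rho>) - (\<integral>z. indicator Bset z \<partial>\<rho> :: real)"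
      by (rule Bochner_Integration.integral_diff) (use Bs r.emeasure_finite[of Bset] in \<open>auto intro!: integrable_real_indicator simp: less_top[symmetric]\<close>)
    ultimately show ?thesis by (simp add: r.prob_space)
  qed
  finally show ?thesis by simp
qed

lemma step:
  fixes g :: "_ \<Rightarrow> real"
  assumes nu: "prob_space \<nu>" "sets \<nu> = sets (Rd d)"
    and H: "\<And>g. g \<in> borel_measurable (Rd d) \<Longrightarrow> (\<And>y. y \<in> space (Rd d) \<Longrightarrow> 0 \<le> g y \<and> g y \<le> 1)
             \<Longrightarrow> \<bar>integral\<^sup>L \<nu> g - integral\<^sup>L \<pi> g\<bar> \<le> T"
    and g[measurable]: "g \<in> borel_measurable (Rd d)" and gb: "\<And>y. y \<in> space (Rd d) \<Longrightarrow> 0 \<le> g y \<and> g y \<le> 1"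
  shows "\<bar>integral\<^sup>L (\<nu> \<bind> K) g - integral\<^sup>L \<pi> g\<bar> \<le> (1 - beta) * T + 2 * (measure \<nu> Bset + measure \<pi> Bset)"
proof -
  have gb': "\<And>y. y \<in> space (Rd d) \<Longrightarrow> \<bar>g y\<bar> \<le> 1" using gb by fastforce
  have km[measurable]: "Kg g \<in> borel_measurable (Rd d)" using Kg_meas[OF g] .
  have e1: "integral\<^sup>L (\<nu> \<bind> K) g = (\<integral>x. Kg g x \<partial>\<nu>)" using bind_int[OF nu g gb'] .
  have e2: "integral\<^sup>L \<pi> g = (\<integral>x. Kg g x \<partial>\<pi>)" using stationary[OF g gb] by simp
  have X: "0 \<le> (\<integral>x. indicator Bset x * Kg g x \<partial>\<rho>) \<and> (\<integral>x. indicator Bset x * Kg g x \<partial>\<rho>) \<le> measure \<rho> Bset"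
    if rho: "prob_space \<rho>" "sets \<rho> = sets (Rd d)" for \<rho>
  proof -
    interpret r: prob_space \<rho> by fact
    have sp: "space \<rho> = space (Rd d)" using rho(2) by (rule sets_eq_imp_space_eq)
    have i1: "integrable \<rho> (\<lambda>x. indicator Bset x * Kg g x)"
      by (rule bnd_int[OF rho, where c=1]) (use Kg_bounds[OF g gb] in \<open>auto simp: indicator_def\<close>)
    have Bs: "Bset \<in> sets \<rho>" using rho(2) by simp
    have i2: "integrable \<rho> (indicator Bset :: _ \<Rightarrow> real)"
      using Bs r.emeasure_finite[of Bset] by (auto intro!: integrable_real_indicator simp: less_top[symmetric])
    have "(\<integral>x. indicator Bset x * Kg g x \<partial>\<rho>) \<le> (\<integral>x. indicator Bset x \<partial>\<rho>)"
      by (rule integral_mono[OF i1 i2]) (use Kg_bounds[OF g gb] sp in \<open>auto simp: indicator_def\<close>)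
    moreover have "Bset \<inter> space \<rho> = Bset" using sp by (auto simp: Bset_def)
    moreover have "0 \<le> (\<integral>x. indicator Bset x * Kg g x \<partial>\<rho>)"
      by (rule integral_nonneg_AE) (use Kg_bounds[OF g gb] sp in \<open>auto intro!: AE_I2 simp: indicator_def\<close>)
    ultimately show ?thesis by simp
  qed
  note Xn = X[OF nu] and Xp = X[OF pi spi]
  have Hh: "\<bar>(\<integral>x. hf g x \<partial>\<nu>) - (\<integral>x. hf g x \<partial>\<pi>)\<bar> \<le> T"
    by (rule H[OF hf_meas[OF g]]) (use hf_bounds[OF g gb] in auto)
  have Mb: "0 \<le> Mg g" "Mg g \<le> 1" using Mg_bounds[OF g gb] by auto
  have mn: "0 \<le> measure \<nu> Bset" "0 \<le> measure \<pi> Bset" by auto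
  have "\<bar>Mg g * (1 - measure \<nu> Bset) - Mg g * (1 - measure \<pi> Bset)\<bar> = \<bar>Mg g * (measure \<pi> Bset - measure \<nu> Bset)\<bar>"
    by (simp add: algebra_simps)
  also have "\<dots> = Mg g * \<bar>measure \<pi> Bset - measure \<nu> Bset\<bar>"
    using Mb by (simp add: abs_mult)
  also have "\<dots> \<le> 1 * \<bar>measure \<pi> Bset - measure \<nu> Bset\<bar>" using Mb by (intro mult_right_mono) auto
  finally have M1: "\<bar>Mg g * (1 - measure \<nu> Bset) - Mg g * (1 - measure \<pi> Bset)\<bar> \<le> \<bar>measure \<pi> Bset - measure \<nu> Bset\<bar>"
    by simp
  have "\<bar>measure \<pi> Bset - measure \<nu> Bset\<bar> \<le> measure \<nu> Bset + measure \<pi> Bset"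
    using mn by (simp add: abs_le_iff)
  with M1 have M2: "\<bar>Mg g * (1 - measure \<nu> Bset) - Mg g * (1 - measure \<pi> Bset)\<bar> \<le> measure \<nu> Bset + measure \<pi> Bset"
    by linarith
  have bb: "0 \<le> 1 - beta" using beta_bounds by simp
  have H2: "\<bar>(1 - beta) * (\<integral>x. hf g x \<partial>\<nu>) - (1 - beta) * (\<integral>x. hf g x \<partial>\<pi>)\<bar> \<le> (1 - beta) * T"
  proof -
    have "\<bar>(1 - beta) * (\<integral>x. hf g x \<partial>\<nu>) - (1 - beta) * (\<integral>x. hf g x \<partial>\<pi>)\<bar>
        = (1 - beta) * \<bar>(\<integral>x. hf g x \<partial>\<nu>) - (\<integral>x. hf g x \<partial>\<pi>)\<bar>"
      using bb by (simp add: abs_mult right_diff_distrib[symmetric])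
    then show ?thesis using mult_left_mono[OF Hh bb] by simp
  qed
  have dn: "(\<integral>x. Kg g x \<partial>\<nu>) = (\<integral>x. indicator Bset x * Kg g x \<partial>\<nu>) + Mg g * (1 - measure \<nu> Bset) + (1 - beta) * (\<integral>x. hf g x \<partial>\<nu>)"
    using decomp_int[OF nu g] gb by blast
  have dp: "(\<integral>x. Kg g x \<partial>\<pi>) = (\<integral>x. indicator Bset x * Kg g x \<partial>\<pi>) + Mg g * (1 - measure \<pi> Bset) + (1 - beta) * (\<integral>x. hf g x \<partial>\<pi>)"
    using decomp_int[OF pi spi g] gb by blast
  show ?thesis unfolding e1 e2
    by (rule lin_aux[OF Xn[THEN conjunct1] Xn[THEN conjunct2] Xp[THEN conjunct1] Xp[THEN conjunct2] M2 H2 dn dp])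
qed



lemma B_growth:
  assumes nu: "prob_space \<nu>" "sets \<nu> = sets (Rd d)"
  shows "measure (\<nu> \<bind> K) Bset \<le> measure \<nu> Bset + measure \<mu> Bset"
proof -
  interpret n: prob_space \<nu> by fact
  have sp: "space \<nu> = space (Rd d)" using nu(2) by (rule sets_eq_imp_space_eq)
  have spb: "space (\<nu> \<bind> K) = space (Rd d)" using bindK(2)[OF nu] by (rule sets_eq_imp_space_eq)
  have im[measurable]: "(indicator Bset :: _ \<Rightarrow> real) \<in> borel_measurable (Rd d)" by measurable
  have ib: "\<And>y. y \<in> space (Rd d) \<Longrightarrow> 0 \<le> (indicator Bset y :: real) \<and> (indicator Bset y :: real) \<le> 1"
    by (auto simp: indicator_def)
  have "Bset \<inter> space (\<nu> \<bind> K) = Bset" using spb by (auto simp: Bset_def)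
  then have "measure (\<nu> \<bind> K) Bset = integral\<^sup>L (\<nu> \<bind> K) (indicator Bset)" by simp
  also have "\<dots> = (\<integral>x. Kg (indicator Bset) x \<partial>\<nu>)"
    by (rule bind_int[OF nu im]) (auto simp: indicator_def)
  also have "\<dots> \<le> (\<integral>x. measure \<mu> Bset + indicator Bset x \<partial>\<nu>)"
  proof (rule integral_mono)
    show "integrable \<nu> (Kg (indicator Bset))"
      by (rule bnd_int[OF nu Kg_meas[OF im], where c=1]) (use Kg_bounds[OF im ib] in auto)
    have "Bset \<in> sets \<nu>" using nu(2) by simp
    then show "integrable \<nu> (\<lambda>x. measure \<mu> Bset + indicator Bset x)"
      using n.emeasure_finite[of Bset] by (auto intro!: integrable_real_indicator simp: less_top[symmetric])
    fix x assume x: "x \<in> space \<nu>"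
    then have x': "x \<in> space (Rd d)" using sp by simp
    define A where "A = (\<integral>z. a x z \<partial>\<mu>)"
    have A0: "0 \<le> A" unfolding A_def using accept_bounds by (simp add: integral_nonneg_AE)
    have A1: "A \<le> 1"
    proof -
      have "A \<le> (\<integral>z. 1 \<partial>\<mu>)" unfolding A_def
        by (rule integral_mono[OF a_x_int[OF x']]) (use accept_le1 in auto)
      then show ?thesis by (simp add: m.prob_space)
    qed
    have "(\<integral>z. a x z * indicator Bset z \<partial>\<mu>) \<le> (\<integral>z. indicator Bset z \<partial>\<mu>)"
    proof (rule integral_mono)
      show "integrable \<mu> (\<lambda>z. a x z * indicator Bset z)"
        by (rule ag_int[OF x' im]) (auto simp: indicator_def)
      have "Bset \<in> sets \<mu>" using smu by simp
      then show "integrable \<mu> (indicator Bset :: _ \<Rightarrow> real)"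
        using m.emeasure_finite[of Bset] by (auto intro!: integrable_real_indicator simp: less_top[symmetric])
      fix z show "a x z * indicator Bset z \<le> (indicator Bset z :: real)"
        using accept_le1[of x z] accept_bounds[of \<mu> \<pi> x z] by (auto simp: indicator_def)
    qed
    moreover have "Bset \<inter> space \<mu> = Bset" using space_mu by (auto simp: Bset_def)
    moreover have "(1 - A) * indicator Bset x \<le> (indicator Bset x :: real)"
      using A0 A1 by (auto simp: indicator_def)
    ultimately show "Kg (indicator Bset) x \<le> measure \<mu> Bset + indicator Bset x"
      unfolding Kg_def A_def by simp
  qed
  also have "\<dots> = measure \<mu> Bset + measure \<nu> Bset"
  proof -
    have "Bset \<in> sets \<nu>" using nu(2) by simp
    moreover have "Bset \<inter> space \<nu> = Bset" using sp by (auto simp: Bset_def)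
    ultimately show ?thesis
      using n.emeasure_finite[of Bset]
      by (subst Bochner_Integration.integral_add) (auto intro!: integrable_real_indicator simp: less_top[symmetric] n.prob_space)
  qed
  finally show ?thesis by simp
qed

abbreviation "law n \<equiv> imh_law d \<mu> \<pi> n"

lemma law_basic: "prob_space (law n) \<and> sets (law n) = sets (Rd d)"
proof (induction n)
  case 0 then show ?case using mu smu by simp
next
  case (Suc n) then show ?case using bindK[of "law n"] by simp
qed

lemma law_B: "measure (law n) Bset \<le> (real n + 1) * measure \<mu> Bset"
proof (induction n)
  case 0 then show ?case by simp
next
  case (Suc n)
  have "measure (law (Suc n)) Bset \<le> measure (law n) Bset + measure \<mu> Bset"
    using B_growth[of "law n"] law_basic[of n] by simp
  then show ?case using Suc by (simp add: algebra_simps)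
qed

lemma law_bound:
  fixes g :: "_ \<Rightarrow> real"
  assumes "g \<in> borel_measurable (Rd d)" "\<And>y. y \<in> space (Rd d) \<Longrightarrow> 0 \<le> g y \<and> g y \<le> 1"
  shows "\<bar>integral\<^sup>L (law n) g - integral\<^sup>L \<pi> g\<bar>
     \<le> (1 - beta) ^ n + (real n + 1)^2 * (2 * (measure \<mu> Bset + measure \<pi> Bset))"
  using assms
proof (induction n arbitrary: g)
  case 0
  have i1: "integral\<^sup>L \<mu> g \<le> 1 \<and> 0 \<le> integral\<^sup>L \<mu> g"
  proof
    have "integral\<^sup>L \<mu> g \<le> (\<integral>x. 1 \<partial>\<mu>)"
      by (rule integral_mono) (use 0 space_mu in \<open>auto intro!: bnd_int[OF mu smu, where c=1]\<close>)
    then show "integral\<^sup>L \<mu> g \<le> 1" by (simp add: m.prob_space)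
    show "0 \<le> integral\<^sup>L \<mu> g" by (rule integral_nonneg_AE) (use 0 space_mu in \<open>auto intro!: AE_I2\<close>)
  qed
  interpret p: prob_space \<pi> by (rule pi)
  have sp: "space \<pi> = space (Rd d)" using spi by (rule sets_eq_imp_space_eq)
  have i2: "integral\<^sup>L \<pi> g \<le> 1 \<and> 0 \<le> integral\<^sup>L \<pi> g"
  proof
    have "integral\<^sup>L \<pi> g \<le> (\<integral>x. 1 \<partial>\<pi>)"
      by (rule integral_mono) (use 0 sp in \<open>auto intro!: bnd_int[OF pi spi, where c=1]\<close>)
    then show "integral\<^sup>L \<pi> g \<le> 1" by (simp add: p.prob_space)
    show "0 \<le> integral\<^sup>L \<pi> g" by (rule integral_nonneg_AE) (use 0 sp in \<open>auto intro!: AE_I2\<close>)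
  qed
  have h1: "\<bar>integral\<^sup>L \<mu> g - integral\<^sup>L \<pi> g\<bar> \<le> 1" using i1 i2 by (auto simp: abs_le_iff)
  show ?case unfolding imh_law.simps(1) by (rule order_trans[OF h1]) simp
next
  case (Suc n)
  define E where "E = 2 * (measure \<mu> Bset + measure \<pi> Bset)"
  have E0: "0 \<le> E" unfolding E_def by simp
  have "\<bar>integral\<^sup>L (law n \<bind> K) g - integral\<^sup>L \<pi> g\<bar>
        \<le> (1 - beta) * ((1 - beta) ^ n + (real n + 1)^2 * E) + 2 * (measure (law n) Bset + measure \<pi> Bset)"
    by (rule step[OF law_basic[THEN conjunct1] law_basic[THEN conjunct2]])
       (use Suc in \<open>auto simp: E_def\<close>)
  also have "\<dots> \<le> (1 - beta) ^ Suc n + (real n + 1)^2 * E + (real n + 1) * E"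
  proof -
    have b: "0 \<le> 1 - beta" "1 - beta \<le> 1" using beta_bounds by auto
    have "(1 - beta) * ((real n + 1)^2 * E) \<le> 1 * ((real n + 1)^2 * E)"
      using b E0 by (intro mult_right_mono) auto
    moreover have "2 * (measure (law n) Bset + measure \<pi> Bset) \<le> (real n + 1) * E"
    proof -
      have e: "(real n + 1) * E = 2 * ((real n + 1) * measure \<mu> Bset) + 2 * ((real n + 1) * measure \<pi> Bset)"
        by (simp add: E_def algebra_simps)
      have pq: "measure \<pi> Bset \<le> (real n + 1) * measure \<pi> Bset"
        by (simp add: algebra_simps)
      show ?thesis by (rule lin2[OF law_B[of n] pq e])
    qed
    ultimately show ?thesis by (simp add: algebra_simps)
  qed
  also have "\<dots> \<le> (1 - beta) ^ Suc n + (real (Suc n) + 1)^2 * E"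
    using E0 by (simp add: power2_eq_square algebra_simps)
  finally show ?case by (simp add: E_def)
qed



lemma tv_bound:
  "tv_dist d (law N) \<pi> \<le> (1 - beta) ^ N + (real N + 1)^2 * (2 * (measure \<mu> Bset + measure \<pi> Bset))"
  unfolding tv_dist_def
proof (rule cSUP_least)
  show "sets (Rd d) \<noteq> {}" by auto
  fix A assume A: "A \<in> sets (Rd d)"
  have Asub: "A \<subseteq> space (Rd d)" using A by (rule sets.sets_into_space)
  have im: "(indicator A :: _ \<Rightarrow> real) \<in> borel_measurable (Rd d)" using A by simp
  have spl: "space (law N) = space (Rd d)" using law_basic[of N] sets_eq_imp_space_eq by blast
  have spp: "space \<pi> = space (Rd d)" using spi by (rule sets_eq_imp_space_eq)
  have "\<bar>integral\<^sup>L (law N) (indicator A) - integral\<^sup>L \<pi> (indicator A)\<bar>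
     \<le> (1 - beta) ^ N + (real N + 1)^2 * (2 * (measure \<mu> Bset + measure \<pi> Bset))"
    by (rule law_bound[OF im]) (auto simp: indicator_def)
  moreover have "A \<inter> space (law N) = A" "A \<inter> space \<pi> = A" using Asub spl spp by auto
  ultimately show "\<bar>measure (law N) A - measure \<pi> A\<bar> \<le> (1 - beta) ^ N + (real N + 1)^2 * (2 * (measure \<mu> Bset + measure \<pi> Bset))"
    by simp
qed

lemma markov_mu:
  assumes q: "0 \<le> q"
  shows "ennreal (exp q) * emeasure \<mu> Bset \<le> (\<integral>\<^sup>+x. ennreal (w x powr q) \<partial>\<mu>)"
proof -
  have "ennreal (exp q) * emeasure \<mu> Bset = (\<integral>\<^sup>+x. ennreal (exp q) * indicator Bset x \<partial>\<mu>)"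
    using smu by (simp add: nn_integral_cmult_indicator)
  also have "\<dots> \<le> (\<integral>\<^sup>+x. ennreal (w x powr q) \<partial>\<mu>)"
  proof (rule nn_integral_mono)
    fix x assume x: "x \<in> space \<mu>"
    show "ennreal (exp q) * indicator Bset x \<le> ennreal (w x powr q)"
    proof (cases "x \<in> Bset")
      case True
      then have "exp 1 < w x" by (simp add: Bset_def)
      then have "exp 1 powr q \<le> w x powr q" using q by (intro powr_mono2) auto
      then have "exp q \<le> w x powr q" by (simp add: powr_def)
      then show ?thesis using True by (simp add: ennreal_leI)
    qed simp
  qed
  finally show ?thesis .
qed

lemma markov_pi:
  assumes q: "1 \<le> q"
  shows "ennreal (exp q) * emeasure \<pi> Bset \<le> ennreal (exp 1) * (\<integral>\<^sup>+x. ennreal (w x powr q) \<partial>\<mu>)"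
proof -
  have Bm: "Bset \<in> sets \<mu>" using smu by simp
  have "emeasure \<pi> Bset = (\<integral>\<^sup>+x. ennreal (w x) * indicator Bset x \<partial>\<mu>)"
    by (subst pi_density, rule emeasure_density[OF _ Bm]) simp
  moreover have meas: "(\<lambda>x. ennreal (w x) * indicator Bset x) \<in> borel_measurable \<mu>" using Bm by measurable
  ultimately have "ennreal (exp q) * emeasure \<pi> Bset = (\<integral>\<^sup>+x. ennreal (exp q) * (ennreal (w x) * indicator Bset x) \<partial>\<mu>)"
    using nn_integral_cmult[OF meas, of "ennreal (exp q)"] by simp
  also have "\<dots> \<le> (\<integral>\<^sup>+x. ennreal (exp 1) * ennreal (w x powr q) \<partial>\<mu>)"
  proof (rule nn_integral_mono)
    fix x assume x: "x \<in> space \<mu>"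
    show "ennreal (exp q) * (ennreal (w x) * indicator Bset x) \<le> ennreal (exp 1) * ennreal (w x powr q)"
    proof (cases "x \<in> Bset")
      case True
      then have wx: "exp 1 < w x" by (simp add: Bset_def)
      then have wp: "0 < w x" using exp_gt_zero[of 1] by linarith
      have "exp 1 powr (q - 1) \<le> w x powr (q - 1)" using q wx by (intro powr_mono2) auto
      then have "exp (q - 1) \<le> w x powr (q - 1)" by (simp add: powr_def)
      then have "w x * exp (q - 1) \<le> w x * w x powr (q - 1)" using wp by simp
      also have "w x * w x powr (q - 1) = w x powr q"
        using wp by (simp add: powr_diff powr_one)
      finally have "exp q * w x \<le> exp 1 * w x powr q"
        by (simp add: exp_diff field_simps mult.commute)
      then show ?thesis using True wp
        by (simp add: ennreal_mult'[symmetric] ennreal_leI)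
    qed simp
  qed
  also have "\<dots> = ennreal (exp 1) * (\<integral>\<^sup>+x. ennreal (w x powr q) \<partial>\<mu>)"
    by (rule nn_integral_cmult) measurable
  finally show ?thesis .
qed



lemma core:
  fixes \<epsilon> :: real
  assumes eps: "0 < \<epsilon>" "\<epsilon> < 1/30000"
    and I: "(\<integral>\<^sup>+x. ennreal (w x powr (4 * ln (1/\<epsilon>))) \<partial>\<mu>) \<le> ennreal (exp 1)"
  shows "\<exists>N::nat. real N \<le> 23 * ln (1/\<epsilon>) \<and> tv_dist d (law N) \<pi> \<le> \<epsilon>"
proof -
  interpret p: prob_space \<pi> by (rule pi)
  define L where "L = ln (1/\<epsilon>)"
  have e272: "exp 1 < (272/100::real)" by (rule e_less_272)
  have e2: "2 \<le> exp (1::real)" using exp_ge_add_one_self[of "1::real"] by simp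
  have L1: "1 \<le> L"
  proof -
    have a: "\<epsilon> * exp 1 \<le> \<epsilon> * 3" using exp_le eps by (intro mult_left_mono) auto
    have b: "\<epsilon> * 3 \<le> 1" using eps by simp
    have c: "exp 1 * \<epsilon> \<le> 1" using order_trans[OF a b] by (simp add: mult.commute)
    then have "exp 1 \<le> 1/\<epsilon>" using eps by (simp add: field_simps)
    then show ?thesis unfolding L_def using eps by (subst ln_ge_iff) auto
  qed
  have Le: "L \<le> 1/\<epsilon>" unfolding L_def using eps by (intro less_imp_le ln_less_self) auto
  have expL: "exp L = 1/\<epsilon>" unfolding L_def using eps by simp
  have expmL: "exp (-L) = \<epsilon>" using expL eps by (simp add: exp_minus)
  define q where "q = 4 * L"
  have q1: "1 \<le> q" "0 \<le> q" using L1 by (auto simp: q_def)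
  have expq: "exp q = 1 / \<epsilon>^4"
  proof -
    have "exp q = exp (real 4 * L)" by (simp add: q_def)
    also have "\<dots> = exp L ^ 4" by (rule exp_of_nat_mult)
    finally show ?thesis using expL by (simp add: power_divide)
  qed
  have I': "(\<integral>\<^sup>+x. ennreal (w x powr q) \<partial>\<mu>) \<le> ennreal (exp 1)" using I by (simp add: q_def L_def)
  have muB: "measure \<mu> Bset \<le> exp 1 * \<epsilon>^4"
  proof -
    have "ennreal (exp q) * emeasure \<mu> Bset \<le> ennreal (exp 1)"
      using markov_mu[OF q1(2)] I' by (rule order_trans)
    then have "ennreal (exp q * measure \<mu> Bset) \<le> ennreal (exp 1)"
      by (simp add: m.emeasure_eq_measure ennreal_mult'')
    then have "exp q * measure \<mu> Bset \<le> exp 1" by (simp add: ennreal_le_iff)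
    then show ?thesis using expq eps by (simp add: field_simps)
  qed
  have piB: "measure \<pi> Bset \<le> exp 1 * exp 1 * \<epsilon>^4"
  proof -
    have "ennreal (exp q) * emeasure \<pi> Bset \<le> ennreal (exp 1) * ennreal (exp 1)"
      using markov_pi[OF q1(1)] mult_left_mono[OF I', of "ennreal (exp 1)"] by (rule order_trans) simp
    moreover have "ennreal (exp q) * emeasure \<pi> Bset = ennreal (exp q * measure \<pi> Bset)"
      by (simp add: p.emeasure_eq_measure ennreal_mult)
    moreover have "ennreal (exp 1) * ennreal (exp 1) = ennreal (exp 1 * exp 1)"
      by (simp add: ennreal_mult)
    ultimately have "ennreal (exp q * measure \<pi> Bset) \<le> ennreal (exp 1 * exp 1)"
      by simp
    then have "exp q * measure \<pi> Bset \<le> exp 1 * exp 1" by (simp add: ennreal_le_iff)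
    then show ?thesis using expq eps by (simp add: field_simps)
  qed
  have e4: "\<epsilon>^4 \<le> \<epsilon>"
  proof -
    have "\<epsilon>^3 \<le> 1" using eps by (intro power_le_one) auto
    then have "\<epsilon> * \<epsilon>^3 \<le> \<epsilon> * 1" using eps by (intro mult_left_mono) auto
    then show ?thesis by (simp add: power_numeral_reduce)
  qed
  define E where "E = 2 * (measure \<mu> Bset + measure \<pi> Bset)"
  have ee: "exp 1 * exp 1 \<le> (272/100) * (272/100::real)"
    using e272 by (intro mult_mono) auto
  have E21: "E \<le> 21 * \<epsilon>^4"
  proof -
    have "E \<le> 2 * (exp 1 * \<epsilon>^4 + exp 1 * exp 1 * \<epsilon>^4)" unfolding E_def using muB piB by simp
    also have "\<dots> = 2 * (exp 1 + exp 1 * exp 1) * \<epsilon>^4" by (simp add: algebra_simps)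
    also have "\<dots> \<le> 21 * \<epsilon>^4"
    proof (rule mult_right_mono)
      show "2 * (exp 1 + exp 1 * exp 1) \<le> (21::real)" using e272 ee by simp
    qed (use eps in simp)
    finally show ?thesis .
  qed
  have piB2: "measure \<pi> Bset \<le> 1/2"
  proof -
    have a: "exp 1 * exp 1 * \<epsilon>^4 \<le> 8 * \<epsilon>^4"
      by (rule mult_right_mono) (use ee eps in simp_all)
    have b: "8 * \<epsilon>^4 \<le> 8 * \<epsilon>" using e4 by simp
    have c: "8 * \<epsilon> \<le> 1/2" using eps by simp
    show ?thesis using piB a b c by linarith
  qed
  have beta11: "1/11 \<le> beta"
  proof -
    have "(1 - measure \<pi> Bset) / (2 * exp 1) \<ge> (1/2) / (2 * exp 1)"
      using piB2 by (intro divide_right_mono) auto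
    moreover have "(1/2) / (2 * exp 1) \<ge> (1/11::real)" using e272 by (simp add: field_simps)
    ultimately show ?thesis using beta_lower by linarith
  qed
  define N where "N = nat \<lceil>11 * (L + 1)\<rceil>"
  have N1: "11 * (L + 1) \<le> real N" unfolding N_def by linarith
  have N2: "real N \<le> 11 * (L + 1) + 1"
  proof -
    have "0 \<le> \<lceil>11 * (L + 1)\<rceil>" using L1 by simp
    then have "real N = real_of_int \<lceil>11 * (L + 1)\<rceil>" unfolding N_def by simp
    also have "\<dots> \<le> 11 * (L + 1) + 1" by (rule of_int_ceiling_le_add_one)
    finally show ?thesis .
  qed
  have p1: "(1 - beta) ^ N \<le> \<epsilon> / 2"
  proof -
    have "(1 - beta) ^ N \<le> exp (-1/11) ^ N"
    proof (rule power_mono)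
      show "0 \<le> 1 - beta" using beta_bounds by simp
      have "1 + (-1/11) \<le> exp (-1/11::real)" by (rule exp_ge_add_one_self)
      then show "1 - beta \<le> exp (-1/11)" using beta11 by simp
    qed
    also have "\<dots> = exp (real N * (-1/11))" by (rule exp_of_nat_mult[symmetric])
    also have "\<dots> \<le> exp (-L + (-1))" using N1 by simp
    also have "\<dots> = \<epsilon> * exp (-1)" using expmL exp_add[of "-L" "-1"] by simp
    also have "\<dots> \<le> \<epsilon> / 2"
    proof -
      have "exp (-1::real) \<le> 1/2" using e2 by (simp add: exp_minus field_simps)
      then have "\<epsilon> * exp (-1) \<le> \<epsilon> * (1/2)" using eps by (intro mult_left_mono) auto
      then show ?thesis by simp
    qed
    finally show ?thesis .
  qed
  have p2: "(real N + 1)^2 * E \<le> \<epsilon> / 2"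
  proof -
    have "real N + 1 \<le> 24 * L" using N2 L1 by simp
    also have "\<dots> \<le> 24 / \<epsilon>" using Le by simp
    finally have n24: "real N + 1 \<le> 24 / \<epsilon>" .
    have "(real N + 1)^2 \<le> (24 / \<epsilon>)^2" using n24 by (intro power_mono) auto
    then have "(real N + 1)^2 * E \<le> (24 / \<epsilon>)^2 * (21 * \<epsilon>^4)"
      using E21 by (intro mult_mono) (auto simp: E_def)
    also have "\<dots> = 12096 * \<epsilon>^2" using eps by (simp add: field_simps power2_eq_square power4_eq_xxxx)
    also have "\<dots> \<le> \<epsilon> / 2"
    proof -
      have "12096 * \<epsilon> \<le> 1/2" using eps by simp
      then have "\<epsilon> * (12096 * \<epsilon>) \<le> \<epsilon> * (1/2)" using eps by (intro mult_left_mono) auto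
      then show ?thesis by (simp add: power2_eq_square algebra_simps)
    qed
    finally show ?thesis .
  qed
  have "tv_dist d (law N) \<pi> \<le> \<epsilon>"
    using tv_bound[of N] p1 p2 unfolding E_def by simp
  moreover have "real N \<le> 23 * ln (1/\<epsilon>)" using N2 L1 unfolding L_def by simp
  ultimately show ?thesis by blast
qed

end



lemma renyi_extract:
  fixes \<mu> \<pi> :: "(nat \<Rightarrow> real) measure"
  assumes q: "1 < q" and R: "renyi q \<pi> \<mu> \<le> ereal t"
  shows "absolutely_continuous \<mu> \<pi>"
    "(\<integral>\<^sup>+x. ennreal (wf \<mu> \<pi> x powr q) \<partial>\<mu>) \<le> ennreal (exp ((q - 1) * t))"
proof -
  define I where "I = (\<integral>\<^sup>+x. ennreal (wf \<mu> \<pi> x powr q) \<partial>\<mu>)"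
  have ren: "renyi q \<pi> \<mu> = (if \<not> absolutely_continuous \<mu> \<pi> then \<infinity> else if I = \<infinity> then \<infinity>
      else ereal (ln (enn2real I) / (q - 1)))"
    using q unfolding renyi_def Let_def I_def wf_def by simp
  show ac: "absolutely_continuous \<mu> \<pi>"
  proof (rule ccontr)
    assume "\<not> absolutely_continuous \<mu> \<pi>"
    then show False using R ren by simp
  qed
  have Ifin: "I \<noteq> \<infinity>"
  proof
    assume "I = \<infinity>"
    then show False using R ren ac by simp
  qed
  have "ereal (ln (enn2real I) / (q - 1)) \<le> ereal t" using R ren ac Ifin by simp
  then have "ln (enn2real I) / (q - 1) \<le> t" by simp
  then have lnI: "ln (enn2real I) \<le> (q - 1) * t" using q by (simp add: divide_le_eq mult.commute)
  have "enn2real I \<le> exp ((q - 1) * t)"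
  proof (cases "enn2real I = 0")
    case True then show ?thesis by simp
  next
    case False
    then have "0 < enn2real I" by (simp add: enn2real_nonneg order_less_le)
    then have "enn2real I = exp (ln (enn2real I))" by simp
    also have "\<dots> \<le> exp ((q - 1) * t)" using lnI by simp
    finally show ?thesis .
  qed
  moreover have "I = ennreal (enn2real I)" using Ifin by (simp add: less_top)
  ultimately show "(\<integral>\<^sup>+x. ennreal (wf \<mu> \<pi> x powr q) \<partial>\<mu>) \<le> ennreal (exp ((q - 1) * t))"
    unfolding I_def[symmetric] by (metis ennreal_leI)
qed

lemma powr_calc:
  fixes \<gamma> L CR :: real
  assumes g: "0 < \<gamma>" and L: "1 \<le> L" and CR: "0 < CR" "CR \<le> 4 powr (-(\<gamma> + 1)) * L powr (-(\<gamma> + 1))"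
  shows "(4 * L - 1) * (CR * (4 * L) powr \<gamma>) \<le> 1"
proof -
  have qp: "0 < 4 * L" using L by simp
  have A0: "0 \<le> CR * (4 * L) powr \<gamma>" using CR by simp
  have "(4 * L - 1) * (CR * (4 * L) powr \<gamma>) \<le> (4 * L) * (CR * (4 * L) powr \<gamma>)"
    using A0 by (intro mult_right_mono) auto
  also have "\<dots> = CR * (4 * L) powr (\<gamma> + 1)"
    using qp by (simp add: powr_add)
  also have "\<dots> \<le> (4 powr (-(\<gamma> + 1)) * L powr (-(\<gamma> + 1))) * (4 * L) powr (\<gamma> + 1)"
    using CR by (intro mult_right_mono) auto
  also have "\<dots> = (4 powr (-(\<gamma> + 1)) * 4 powr (\<gamma> + 1)) * (L powr (-(\<gamma> + 1)) * L powr (\<gamma> + 1))"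
    using L by (simp add: powr_mult)
  also have "\<dots> = 1"
    using L by (simp add: powr_add[symmetric])
  finally show ?thesis .
qed

lemma eps_L1:
  fixes \<epsilon> :: real
  assumes eps: "0 < \<epsilon>" "\<epsilon> < 1/30000"
  shows "1 \<le> ln (1/\<epsilon>)"
proof -
  have a: "\<epsilon> * exp 1 \<le> \<epsilon> * 3" using exp_le eps by (intro mult_left_mono) auto
  have b: "\<epsilon> * 3 \<le> 1" using eps by simp
  have c: "exp 1 * \<epsilon> \<le> 1" using order_trans[OF a b] by (simp add: mult.commute)
  then have "exp 1 \<le> 1/\<epsilon>" using eps by (simp add: field_simps)
  then show ?thesis using eps by (subst ln_ge_iff) auto
qed

lemma main_inst:
  fixes \<gamma> \<epsilon> CR :: real and \<mu> \<pi> :: "(nat \<Rightarrow> real) measure"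
  assumes g: "0 < \<gamma>" and eps: "0 < \<epsilon>" "\<epsilon> < 1/30000"
    and mu: "prob_space \<mu>" "sets \<mu> = sets (Rd d)" and pi: "prob_space \<pi>" "sets \<pi> = sets (Rd d)"
    and CR: "0 < CR" "CR \<le> 4 powr (-(\<gamma> + 1)) * ln (1 / \<epsilon>) powr (- (\<gamma> + 1))"
    and Rq: "\<And>q. 1 \<le> q \<Longrightarrow> q \<le> 4 * ln (1 / \<epsilon>) \<Longrightarrow> renyi q \<pi> \<mu> \<le> ereal (CR * q powr \<gamma>)"
  shows "\<exists>N::nat. real N \<le> 23 * ln (1 / \<epsilon>) \<and> tv_dist d (imh_law d \<mu> \<pi> N) \<pi> \<le> \<epsilon>"
proof -
  define L where "L = ln (1/\<epsilon>)"
  have L1: "1 \<le> L" unfolding L_def using eps by (rule eps_L1)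
  have R: "renyi (4 * L) \<pi> \<mu> \<le> ereal (CR * (4 * L) powr \<gamma>)"
    by (rule Rq) (use L1 in \<open>simp_all add: L_def\<close>)
  have q1: "1 < 4 * L" using L1 by simp
  note ex = renyi_extract[OF q1 R]
  interpret imh_loc d \<mu> \<pi>
    by (intro imh_loc.intro mu pi ex(1))
  have "(4 * L - 1) * (CR * (4 * L) powr \<gamma>) \<le> 1"
    by (rule powr_calc[OF g L1 CR(1)]) (use CR(2) in \<open>simp add: L_def\<close>)
  then have "ennreal (exp ((4 * L - 1) * (CR * (4 * L) powr \<gamma>))) \<le> ennreal (exp 1)"
    by (intro ennreal_leI) simp
  with ex(2) have I: "(\<integral>\<^sup>+x. ennreal (w x powr (4 * ln (1/\<epsilon>))) \<partial>\<mu>) \<le> ennreal (exp 1)"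
    unfolding L_def by (rule order_trans)
  show ?thesis using core[OF eps I] .
qed

theorem theorem3:
  shows "\<forall>\<gamma>::real. \<gamma> > 0 \<longrightarrow>
    (\<exists>C>0. \<exists>c>0. \<exists>K>0. \<exists>\<epsilon>\<^sub>0::real. 0 < \<epsilon>\<^sub>0 \<and> \<epsilon>\<^sub>0 < 1 \<and>
      (\<forall>(d::nat) (\<epsilon>::real) (\<mu>::(nat \<Rightarrow> real) measure) (\<pi>::(nat \<Rightarrow> real) measure) (Ch::real) (C\<^sub>R::real).
         0 < \<epsilon> \<and> \<epsilon> < \<epsilon>\<^sub>0 \<and>
         prob_space \<mu> \<and> sets \<mu> = sets (Rd d) \<and>
         prob_space \<pi> \<and> sets \<pi> = sets (Rd d) \<and>
         Ch > 0 \<and> cheeger d \<pi> Ch \<and>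
         C\<^sub>R > 0 \<and> C\<^sub>R \<le> c * ln (1 / \<epsilon>) powr (- (\<gamma> + 1)) \<and>
         (\<forall>q::real. 1 \<le> q \<and> q \<le> C * ln (1 / \<epsilon>) \<longrightarrow>
             renyi q \<mu> \<pi> \<le> ereal (C\<^sub>R * q powr \<gamma>) \<and> renyi q \<pi> \<mu> \<le> ereal (C\<^sub>R * q powr \<gamma>)) \<and>
         atomless \<mu> \<and> atomless \<pi>
       \<longrightarrow> (\<exists>N::nat. real N \<le> K * ln (1 / \<epsilon>) \<and> tv_dist d (imh_law d \<mu> \<pi> N) \<pi> \<le> \<epsilon>)))"
proof (intro allI impI)
  fix \<gamma> :: real assume g: "\<gamma> > 0"
  have c0: "0 < (4::real) powr (-(\<gamma> + 1))" by simp
  show "\<exists>C>0. \<exists>c>0. \<exists>K>0. \<exists>\<epsilon>\<^sub>0::real. 0 < \<epsilon>\<^sub>0 \<and> \<epsilon>\<^sub>0 < 1 \<and>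
      (\<forall>(d::nat) (\<epsilon>::real) (\<mu>::(nat \<Rightarrow> real) measure) (\<pi>::(nat \<Rightarrow> real) measure) (Ch::real) (C\<^sub>R::real).
         0 < \<epsilon> \<and> \<epsilon> < \<epsilon>\<^sub>0 \<and>
         prob_space \<mu> \<and> sets \<mu> = sets (Rd d) \<and>
         prob_space \<pi> \<and> sets \<pi> = sets (Rd d) \<and>
         Ch > 0 \<and> cheeger d \<pi> Ch \<and>
         C\<^sub>R > 0 \<and> C\<^sub>R \<le> c * ln (1 / \<epsilon>) powr (- (\<gamma> + 1)) \<and>
         (\<forall>q::real. 1 \<le> q \<and> q \<le> C * ln (1 / \<epsilon>) \<longrightarrow>
             renyi q \<mu> \<pi> \<le> ereal (C\<^sub>R * q powr \<gamma>) \<and> renyi q \<pi> \<mu> \<le> ereal (C\<^sub>R * q powr \<gamma>)) \<and>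
         atomless \<mu> \<and> atomless \<pi>
       \<longrightarrow> (\<exists>N::nat. real N \<le> K * ln (1 / \<epsilon>) \<and> tv_dist d (imh_law d \<mu> \<pi> N) \<pi> \<le> \<epsilon>))"
    apply (rule exI[of _ 4], rule conjI, simp)
    apply (rule exI[of _ "4 powr (-(\<gamma> + 1))"], rule conjI, rule c0)
    apply (rule exI[of _ 23], rule conjI, simp)
    apply (rule exI[of _ "1/30000"], rule conjI, simp, rule conjI, simp)
    apply (intro allI impI)
    apply (elim conjE)
    subgoal premises P for d \<epsilon> \<mu> \<pi> Ch CR
      by (rule main_inst[OF g P(1) P(2) P(3) P(4) P(5) P(6) P(9) P(10)]) (use P(11) in blast)
    done
qed


end
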